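(* Let $u$ be any configuration on $K_{m,n}$. Consider the following procedure. Set $v_0=\mathrm{park}(u)$, $f_0=0$ and $k=0$. While the value of $v_k$ at the sink $a_m$ is $\ge 0$: choose an index $i$ with $(v_k)_{b_i}=0$ (such an index always exists), set $v_{k+1}=\mathrm{park}(v_k-e_{b_i})$, $f_{k+1}=f_k+e_{b_i}$, and increase $k$ by one. Then this procedure is always executable and terminates after some finite number $N$ of iterations, and for any choice of the indices $i$ along the way, the final configuration $f_N$ is a proof for the rank of $u$; in particular $\mathrm{rank}(u)=N-1=\mathrm{degree}(f_N)-1$.
   Context: Let $m,n\ge 1$. $K_{m,n}$ is the complete bipartite graph with vertex set $V=A_m\sqcup B_n$, $A_m=\{a_1,\dots,a_m\}$, $B_n=\{b_1,\dots,b_n\}$, with exactly one edge $\{a_i,b_j\}$ for every $i,j$ and no other edges; the vertex $a_m$ is called the sink. A configuration is a function $u:V\to\mathbb Z$, written $u_c=u(c)$; $\mathrm{degree}(u)=\sum_{c\in V}u_c$. For $c\in V$, $e_c$ is the configuration equal to $1$ at $c$ and $0$ elsewhere. For $c\in V$ with graph degree $d_c$ (so $d_{a_i}=n$, $d_{b_j}=m$), the toppling vector is $\Delta^{(c)}=d_c e_c-\sum_{c'\text{ adjacent to }c}e_{c'}$, and for $C\subseteq V$, $\Delta^{(C)}=\sum_{c\in C}\Delta^{(c)}$. Two configurations are toppling equivalent if their difference is an integer linear combination of the vectors $\Delta^{(c)}$, $c\in V$. A configuration is effective if it is toppling equivalent to a configuration with all values $\ge 0$ (non-negative). The rank is $\mathrm{rank}(u)=-1+\min\{\mathrm{degree}(f):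 f \text{ non-negative and } u-f \text{ not effective}\}$. A proof for the rank of $u$ is a non-negative configuration $f$ such that $u-f$ is not effective and $\mathrm{degree}(f)=\mathrm{rank}(u)+1$. A configuration $u$ is parking (with respect to the sink $a_m$) if $u_c\ge 0$ for every $c\neq a_m$ and, for every non-empty $C\subseteq V\setminus\{a_m\}$, the configuration $u-\Delta^{(C)}$ takes a negative value at some vertex other than $a_m$. Every configuration $u$ is toppling equivalent to exactly one parking configuration, denoted $\mathrm{park}(u)$; and $u$ is effective if and only if $\mathrm{park}(u)$ is non-negative (i.e. its value at the sink is $\ge 0$). *)

theory Defs
  imports Main
begin

text \<open>Vertices of K_{m,n}: A i (1 <= i <= m) and B j (1 <= j <= n).
  Configurations are functions vert => int; only values on the vertex set matter.\<close>

datatype vert = A nat | B nat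

type_synonym config = "vert \<Rightarrow> int"

definition verts :: "nat \<Rightarrow> nat \<Rightarrow> vert set" where
  "verts m n = A ` {1..m} \<union> B ` {1..n}"

definition sink :: "nat \<Rightarrow> vert" where
  "sink m = A m"

definition adj :: "nat \<Rightarrow> nat \<Rightarrow> vert \<Rightarrow> vert \<Rightarrow> bool" where
  "adj m n x y \<longleftrightarrow> (\<exists>i\<in>{1..m}. \<exists>j\<in>{1..n}. (x = A i \<and> y = B j) \<or> (x = B j \<and> y = A i))"

definition vdeg :: "nat \<Rightarrow> nat \<Rightarrow> vert \<Rightarrow> int" where
  "vdeg m n c = (case c of A _ \<Rightarrow> int n | B _ \<Rightarrow> int m)"

definition degree :: "nat \<Rightarrow> nat \<Rightarrow> config \<Rightarrow> int" where
  "degree m n u = (\<Sum>c\<in>verts m n. u c)"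

definition unit_conf :: "vert \<Rightarrow> config" ("e") where
  "e c = (\<lambda>x. if x = c then 1 else 0)"

definition toppling :: "nat \<Rightarrow> nat \<Rightarrow> vert \<Rightarrow> config" where
  "toppling m n c = (\<lambda>x. vdeg m n c * e c x - (if adj m n c x then 1 else 0))"

definition toppling_set :: "nat \<Rightarrow> nat \<Rightarrow> vert set \<Rightarrow> config" where
  "toppling_set m n C = (\<lambda>x. \<Sum>c\<in>C. toppling m n c x)"

definition top_equiv :: "nat \<Rightarrow> nat \<Rightarrow> config \<Rightarrow> config \<Rightarrow> bool" where
  "top_equiv m n u w \<longleftrightarrow>
     (\<exists>z :: vert \<Rightarrow> int. \<forall>x\<in>verts m n. u x - w x = (\<Sum>c\<in>verts m n. z c * toppling m n c x))"

definition nonneg :: "nat \<Rightarrow> nat \<Rightarrow> config \<Rightarrow> bool" where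
  "nonneg m n f \<longleftrightarrow> (\<forall>x\<in>verts m n. f x \<ge> 0)"

definition effective :: "nat \<Rightarrow> nat \<Rightarrow> config \<Rightarrow> bool" where
  "effective m n u \<longleftrightarrow> (\<exists>w. top_equiv m n u w \<and> nonneg m n w)"

definition rank :: "nat \<Rightarrow> nat \<Rightarrow> config \<Rightarrow> int" where
  "rank m n u = int (LEAST d. \<exists>f. nonneg m n f \<and> \<not> effective m n (u - f) \<and> degree m n f = int d) - 1"

definition proof_for_rank :: "nat \<Rightarrow> nat \<Rightarrow> config \<Rightarrow> config \<Rightarrow> bool" where
  "proof_for_rank m n u f \<longleftrightarrow>
     nonneg m n f \<and> \<not> effective m n (u - f) \<and> degree m n f = rank m n u + 1"

definition parking :: "nat \<Rightarrow> nat \<Rightarrow> config \<Rightarrow> bool" where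
  "parking m n u \<longleftrightarrow>
     (\<forall>c\<in>verts m n - {sink m}. u c \<ge> 0) \<and>
     (\<forall>C. C \<subseteq> verts m n - {sink m} \<and> C \<noteq> {} \<longrightarrow>
          (\<exists>c\<in>verts m n - {sink m}. (u - toppling_set m n C) c < 0))"

definition park :: "nat \<Rightarrow> nat \<Rightarrow> config \<Rightarrow> config" where
  "park m n u = (THE p. parking m n p \<and> top_equiv m n u p \<and> (\<forall>x. x \<notin> verts m n \<longrightarrow> p x = 0))"

fun steps :: "nat \<Rightarrow> nat \<Rightarrow> config \<Rightarrow> nat list \<Rightarrow> config" where
  "steps m n v [] = v"
| "steps m n v (i # is) = steps m n (park m n (v - e (B i))) is"

definition v_of :: "nat \<Rightarrow> nat \<Rightarrow> config \<Rightarrow> nat list \<Rightarrow> config" where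
  "v_of m n u is = steps m n (park m n u) is"

definition f_of :: "nat list \<Rightarrow> config" where
  "f_of is = (\<lambda>x. \<Sum>i\<leftarrow>is. e (B i) x)"

definition legal :: "nat \<Rightarrow> nat \<Rightarrow> config \<Rightarrow> nat list \<Rightarrow> bool" where
  "legal m n u is \<longleftrightarrow>
     (\<forall>k<length is. is ! k \<in> {1..n} \<and> v_of m n u (take k is) (sink m) \<ge> 0
        \<and> v_of m n u (take k is) (B (is ! k)) = 0)"

definition complete_run :: "nat \<Rightarrow> nat \<Rightarrow> config \<Rightarrow> nat list \<Rightarrow> bool" where
  "complete_run m n u is \<longleftrightarrow> legal m n u is \<and> v_of m n u is (sink m) < 0"

end

theory Submission
  imports Defs
begin


definition Tz :: "nat \<Rightarrow> nat \<Rightarrow> (vert \<Rightarrow> int) \<Rightarrow> vert \<Rightarrow> int" where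
  "Tz m n z x = (\<Sum>c\<in>verts m n. z c * toppling m n c x)"

definition nbrs :: "nat \<Rightarrow> nat \<Rightarrow> vert \<Rightarrow> vert set" where
  "nbrs m n x = {y\<in>verts m n. adj m n x y}"

definition ind :: "vert set \<Rightarrow> vert \<Rightarrow> int" where
  "ind C y = (if y \<in> C then 1 else 0)"

lemma finite_verts[simp]: "finite (verts m n)"
  by (simp add: verts_def)

lemma A_in_verts[simp]: "A i \<in> verts m n \<longleftrightarrow> 1 \<le> i \<and> i \<le> m"
  by (auto simp: verts_def)

lemma B_in_verts[simp]: "B j \<in> verts m n \<longleftrightarrow> 1 \<le> j \<and> j \<le> n"
  by (auto simp: verts_def)

lemma adj_sym: "adj m n x y = adj m n y x"
  by (auto simp: adj_def)

lemma adj_AB[simp]: "adj m n (A i) (B j) \<longleftrightarrow> 1 \<le> i \<and> i \<le> m \<and> 1 \<le> j \<and> j \<le> n"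
  by (auto simp: adj_def)
lemma adj_BA[simp]: "adj m n (B j) (A i) \<longleftrightarrow> 1 \<le> i \<and> i \<le> m \<and> 1 \<le> j \<and> j \<le> n"
  by (auto simp: adj_def)
lemma adj_AA[simp]: "\<not> adj m n (A i) (A j)"
  by (auto simp: adj_def)
lemma adj_BB[simp]: "\<not> adj m n (B i) (B j)"
  by (auto simp: adj_def)

lemma nbrs_A: "1 \<le> i \<Longrightarrow> i \<le> m \<Longrightarrow> nbrs m n (A i) = B ` {1..n}"
  by (auto simp: nbrs_def verts_def)
lemma nbrs_B: "1 \<le> j \<Longrightarrow> j \<le> n \<Longrightarrow> nbrs m n (B j) = A ` {1..m}"
  by (auto simp: nbrs_def verts_def)

lemma nbrs_sub: "nbrs m n x \<subseteq> verts m n"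
  by (auto simp: nbrs_def)

lemma card_nbrs: "x \<in> verts m n \<Longrightarrow> vdeg m n x = int (card (nbrs m n x))"
  by (auto simp: verts_def vdeg_def nbrs_A nbrs_B card_image inj_on_def)

lemma toppling_sym: "toppling m n c x = toppling m n x c"
  by (auto simp: toppling_def unit_conf_def adj_sym)

lemma Tz_form:
  assumes "x \<in> verts m n"
  shows "Tz m n z x = (\<Sum>y\<in>nbrs m n x. z x - z y)"
proof -
  have "Tz m n z x = (\<Sum>c\<in>verts m n. z c * (vdeg m n c * e c x)) - (\<Sum>c\<in>verts m n. z c * (if adj m n c x then 1 else 0))"
    by (simp add: Tz_def toppling_def algebra_simps sum_subtractf)
  also have "(\<Sum>c\<in>verts m n. z c * (vdeg m n c * e c x)) = z x * vdeg m n x"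
    using assms by (simp add: unit_conf_def if_distrib cong: if_cong)
  also have "(\<Sum>c\<in>verts m n. z c * (if adj m n c x then 1 else 0)) = (\<Sum>c\<in>nbrs m n x. z c)"
    by (simp add: nbrs_def sum.inter_filter[symmetric] if_distrib adj_sym cong: if_cong)
  finally show ?thesis
    using assms by (simp add: card_nbrs sum_subtractf)
qed



lemma Tz_add: "Tz m n (\<lambda>c. z1 c + z2 c) x = Tz m n z1 x + Tz m n z2 x"
  by (simp add: Tz_def algebra_simps sum.distrib)
lemma Tz_diff: "Tz m n (\<lambda>c. z1 c - z2 c) x = Tz m n z1 x - Tz m n z2 x"
  by (simp add: Tz_def algebra_simps sum_subtractf)
lemma Tz_neg: "Tz m n (\<lambda>c. - z c) x = - Tz m n z x"
  by (simp add: Tz_def sum_negf)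
lemma Tz_smult: "Tz m n (\<lambda>c. a * z c) x = a * Tz m n z x"
  by (simp add: Tz_def sum_distrib_left algebra_simps)
lemma Tz_zero: "Tz m n (\<lambda>c. 0) x = 0"
  by (simp add: Tz_def)
lemma Tz_cong: "(\<And>c. c \<in> verts m n \<Longrightarrow> z c = z' c) \<Longrightarrow> Tz m n z x = Tz m n z' x"
  by (simp add: Tz_def)
lemma Tz_shift: "x \<in> verts m n \<Longrightarrow> Tz m n (\<lambda>c. z c - K) x = Tz m n z x"
  by (simp add: Tz_form)
lemma Tz_const: "x \<in> verts m n \<Longrightarrow> Tz m n (\<lambda>c. K) x = 0"
  by (simp add: Tz_form)

lemma toppling_set_Tz: "C \<subseteq> verts m n \<Longrightarrow> toppling_set m n C x = Tz m n (ind C) x"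
proof -
  assume C: "C \<subseteq> verts m n"
  have "Tz m n (ind C) x = (\<Sum>c\<in>verts m n. if c \<in> C then toppling m n c x else 0)"
    by (auto simp: Tz_def ind_def intro!: sum.cong)
  also have "\<dots> = (\<Sum>c\<in>C. toppling m n c x)"
    using C by (simp add: sum.If_cases Int_absorb1)
  finally show ?thesis by (simp add: toppling_set_def)
qed

lemma sum_Tz: "(\<Sum>x\<in>verts m n. Tz m n z x) = 0"
proof -
  have "(\<Sum>x\<in>verts m n. Tz m n z x) = (\<Sum>c\<in>verts m n. z c * (\<Sum>x\<in>verts m n. toppling m n c x))"
    unfolding Tz_def by (subst sum.swap) (simp add: sum_distrib_left)
  also have "\<dots> = (\<Sum>c\<in>verts m n. z c * Tz m n (\<lambda>_. 1) c)"
    by (simp add: Tz_def toppling_sym)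
  also have "\<dots> = 0" by (simp add: Tz_const)
  finally show ?thesis .
qed

lemma top_equiv_Tz: "top_equiv m n u w \<longleftrightarrow> (\<exists>z. \<forall>x\<in>verts m n. u x - w x = Tz m n z x)"
  by (simp add: top_equiv_def Tz_def)

lemma top_equiv_refl: "top_equiv m n u u"
  unfolding top_equiv_Tz by (rule exI[of _ "\<lambda>_. 0"]) (simp add: Tz_zero)

lemma top_equiv_sym: "top_equiv m n u w \<Longrightarrow> top_equiv m n w u"
  unfolding top_equiv_Tz
  apply clarify
  apply (rule_tac x="\<lambda>c. - z c" in exI)
  by (simp add: Tz_neg) (metis minus_diff_eq)

lemma top_equiv_trans: "top_equiv m n u v \<Longrightarrow> top_equiv m n v w \<Longrightarrow> top_equiv m n u w"
  unfolding top_equiv_Tz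
  apply clarify
  subgoal for z1 z2
    apply (rule_tac x="\<lambda>c. z1 c + z2 c" in exI)
    by (simp add: Tz_add) (metis diff_add_eq diff_diff_eq2 add_diff_cancel_left')
  done

lemma top_equiv_diff: "top_equiv m n u w \<Longrightarrow> top_equiv m n (u - g) (w - g)"
  unfolding top_equiv_Tz by auto


lemma top_equiv_cong: "(\<And>x. x \<in> verts m n \<Longrightarrow> u x = u' x) \<Longrightarrow> top_equiv m n u w \<longleftrightarrow> top_equiv m n u' w"
  unfolding top_equiv_Tz by auto

lemma top_equiv_cong2: "(\<And>x. x \<in> verts m n \<Longrightarrow> w x = w' x) \<Longrightarrow> top_equiv m n u w \<longleftrightarrow> top_equiv m n u w'"
  unfolding top_equiv_Tz by auto

lemma degree_equiv: "top_equiv m n u w \<Longrightarrow> degree m n u = degree m n w"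
proof -
  assume "top_equiv m n u w"
  then obtain z where z: "\<And>x. x \<in> verts m n \<Longrightarrow> u x - w x = Tz m n z x"
    unfolding top_equiv_Tz by auto
  have "degree m n u - degree m n w = (\<Sum>x\<in>verts m n. u x - w x)"
    by (simp add: degree_def sum_subtractf)
  also have "\<dots> = (\<Sum>x\<in>verts m n. Tz m n z x)" using z by simp
  also have "\<dots> = 0" by (rule sum_Tz)
  finally show ?thesis by simp
qed

lemma degree_diff: "degree m n (u - g) = degree m n u - degree m n g"
  by (simp add: degree_def sum_subtractf)
lemma degree_add: "degree m n (\<lambda>x. u x + g x) = degree m n u + degree m n g"
  by (simp add: degree_def sum.distrib)
lemma degree_e: "x \<in> verts m n \<Longrightarrow> degree m n (e x) = 1"
  by (simp add: degree_def unit_conf_def)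



lemma Tz_ind_le_max:
  assumes x: "x \<in> verts m n" and M: "\<And>y. y \<in> verts m n \<Longrightarrow> z y \<le> z x"
  defines "C \<equiv> {y\<in>verts m n. z y = z x}"
  shows "\<And>y0. y0 \<in> nbrs m n x \<Longrightarrow> Tz m n (ind C) x + (z x - z y0 - (1 - ind C y0)) \<le> Tz m n z x"
    and "Tz m n (ind C) x \<le> Tz m n z x"
proof -
  have xC: "x \<in> C" using x by (simp add: C_def)
  have trm: "0 \<le> (z x - z y) - (ind C x - ind C y)" if "y \<in> nbrs m n x" for y
  proof -
    have yv: "y \<in> verts m n" using that nbrs_sub by auto
    show ?thesis
    proof (cases "y \<in> C")
      case True then show ?thesis using xC by (simp add: ind_def C_def)
    next
      case False then have "z y < z x" using M[OF yv] yv by (auto simp: C_def)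
      then show ?thesis using xC False by (simp add: ind_def)
    qed
  qed
  have eq: "Tz m n z x - Tz m n (ind C) x = (\<Sum>y\<in>nbrs m n x. (z x - z y) - (ind C x - ind C y))"
    using x by (simp add: Tz_form sum_subtractf)
  have fin: "finite (nbrs m n x)" using nbrs_sub finite_subset by (metis finite_verts)
  show "Tz m n (ind C) x \<le> Tz m n z x"
  proof -
    have "0 \<le> (\<Sum>y\<in>nbrs m n x. (z x - z y) - (ind C x - ind C y))"
      by (rule sum_nonneg) (rule trm)
    then show ?thesis using eq by linarith
  qed
  fix y0 assume y0: "y0 \<in> nbrs m n x"
  have "(z x - z y0) - (ind C x - ind C y0) \<le> (\<Sum>y\<in>nbrs m n x. (z x - z y) - (ind C x - ind C y))"
    by (rule member_le_sum[OF y0 trm fin]) auto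
  then show "Tz m n (ind C) x + (z x - z y0 - (1 - ind C y0)) \<le> Tz m n z x"
    using eq xC by (simp add: ind_def)
qed

lemma Tz_ind_outside:
  assumes x: "x \<in> verts m n" "x \<notin> C"
  shows "Tz m n (ind C) x \<le> 0"
  using x by (simp add: Tz_form ind_def sum_nonpos)

lemma verts_cases:
  assumes "x \<in> verts m n"
  obtains (Sk) "x = A m" | (Ai) i where "x = A i" "1 \<le> i" "i < m" | (Bj) j where "x = B j" "1 \<le> j" "j \<le> n"
proof (cases x)
  case (A i)
  then show ?thesis using assms that(1,2) by (cases "i = m") auto
next
  case (B j)
  then show ?thesis using assms that(3) by auto
qed

lemma sink_eq: "sink m = A m" by (simp add: sink_def)

context
  fixes m n :: nat
  assumes m1: "1 \<le> m" and n1: "1 \<le> n"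
begin


lemma s_in[simp]: "(A m) \<in> verts m n" using m1 by simp
lemma nbrs_s: "nbrs m n (A m) = B ` {1..n}" using m1 by (simp add: nbrs_A)
lemma B_nbr_s: "1 \<le> j \<Longrightarrow> j \<le> n \<Longrightarrow> B j \<in> nbrs m n (A m)" by (simp add: nbrs_s)

lemma parking_nonneg: "parking m n p \<Longrightarrow> x \<in> verts m n \<Longrightarrow> x \<noteq> (A m) \<Longrightarrow> 0 \<le> p x"
  unfolding parking_def sink_eq by blast

lemma parking_witness:
  assumes "parking m n p" "C \<subseteq> verts m n - {(A m)}" "C \<noteq> {}"
  shows "\<exists>c\<in>verts m n - {(A m)}. p c - Tz m n (ind C) c < 0"
proof -
  from assms(1) have "\<exists>c\<in>verts m n - {(A m)}. (p - toppling_set m n C) c < 0"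
    unfolding parking_def sink_eq using assms(2,3) by blast
  moreover have "toppling_set m n C c = Tz m n (ind C) c" for c
    using assms(2) by (intro toppling_set_Tz) auto
  ultimately show ?thesis by simp
qed

lemma parking_cong:
  assumes "\<And>x. x \<in> verts m n \<Longrightarrow> p x = q x"
  shows "parking m n p = parking m n q"
proof -
  let ?S = "verts m n - {sink m}"
  have e: "\<And>c. c \<in> ?S \<Longrightarrow> p c = q c" using assms by auto
  have 1: "(\<forall>c\<in>?S. 0 \<le> p c) = (\<forall>c\<in>?S. 0 \<le> q c)" using e by auto
  have 2: "(\<exists>c\<in>?S. p c - t c < 0) = (\<exists>c\<in>?S. q c - t c < 0)" for t :: "vert \<Rightarrow> int"
    using e by auto
  show ?thesis unfolding parking_def fun_diff_def using 1 2 by presburger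
qed

lemma parking_B_zero:
  assumes p: "parking m n p"
  shows "\<exists>j\<in>{1..n}. p (B j) = 0"
proof -
  define C where "C = verts m n - {(A m)}"
  have "B 1 \<in> C" using n1 m1 by (simp add: C_def)
  then have "C \<noteq> {}" by auto
  then obtain c where c: "c \<in> verts m n - {(A m)}" "p c - Tz m n (ind C) c < 0"
    using parking_witness[OF p, of C] by (auto simp: C_def)
  have cv: "c \<in> verts m n" using c by simp
  show ?thesis
  using cv proof (cases rule: verts_cases)
    case Sk then show ?thesis using c by simp
  next
    case (Ai i)
    have "Tz m n (ind C) c = 0"
      using Ai m1 by (simp add: Tz_form nbrs_A ind_def C_def, intro sum.neutral) auto
    then show ?thesis using c parking_nonneg[OF p, of c] by simp
  next
    case (Bj j)
    have "nbrs m n c = A ` {1..m}" using Bj by (simp add: nbrs_B)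
    have "Tz m n (ind C) c = (\<Sum>y\<in>A ` {1..m}. 1 - ind C y)"
      using Bj by (simp add: Tz_form nbrs_B ind_def C_def)
    also have "\<dots> = (\<Sum>y\<in>A ` {1..m}. if y = (A m) then 1 else 0)"
      using m1 by (intro sum.cong) (auto simp: ind_def C_def)
    also have "\<dots> = 1" using m1 by (simp add: sum.delta)
    finally have "p c < 1" using c by simp
    then have "p (B j) = 0" using Bj parking_nonneg[OF p, of c] c by auto
    then show ?thesis using Bj by auto
  qed
qed

end


lemma Tz_adjoint:
  "(\<Sum>x\<in>verts m n. f x * Tz m n z x) = (\<Sum>c\<in>verts m n. z c * Tz m n f c)"
proof -
  have "(\<Sum>x\<in>verts m n. f x * Tz m n z x) = (\<Sum>x\<in>verts m n. \<Sum>c\<in>verts m n. f x * (z c * toppling m n c x))"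
    by (simp add: Tz_def sum_distrib_left)
  also have "\<dots> = (\<Sum>c\<in>verts m n. \<Sum>x\<in>verts m n. f x * (z c * toppling m n c x))"
    by (rule sum.swap)
  also have "\<dots> = (\<Sum>c\<in>verts m n. z c * Tz m n f c)"
    by (simp add: Tz_def sum_distrib_left toppling_sym algebra_simps)
  finally show ?thesis .
qed

definition hf :: "nat \<Rightarrow> vert \<Rightarrow> int" where
  "hf m x = (case x of A i \<Rightarrow> if i = m then 0 else int m + 1 | B j \<Rightarrow> int m)"

context
  fixes m n :: nat
  assumes m1: "1 \<le> m" and n1: "1 \<le> n"
begin

lemma Th_pos:
  assumes x: "x \<in> verts m n" "x \<noteq> A m"
  shows "1 \<le> Tz m n (hf m) x"
  using x(1)
proof (cases rule: verts_cases)
  case Sk then show ?thesis using x by simp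
next
  case (Ai i)
  have "Tz m n (hf m) x = (\<Sum>y\<in>B ` {1..n}. hf m (A i) - hf m y)"
    using Ai by (simp add: Tz_form nbrs_A)
  also have "\<dots> = (\<Sum>y\<in>B ` {1..n}. 1)"
    using Ai by (intro sum.cong) (auto simp: hf_def)
  also have "\<dots> = int n" by (simp add: card_image inj_on_def)
  finally show ?thesis using n1 by simp
next
  case (Bj j)
  have "Tz m n (hf m) x = (\<Sum>y\<in>A ` {1..m}. int m - hf m y)"
    using Bj by (simp add: Tz_form nbrs_B hf_def)
  also have "\<dots> = (\<Sum>i\<in>{1..m}. int m - hf m (A i))"
    by (simp add: sum.reindex inj_on_def)
  also have "\<dots> = (int m - hf m (A m)) + (\<Sum>i\<in>{1..m} - {m}. int m - hf m (A i))"
    using m1 by (subst sum.remove[of _ m]) auto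
  also have "(\<Sum>i\<in>{1..m} - {m}. int m - hf m (A i)) = (\<Sum>i\<in>{1..m} - {m}. -1)"
    by (intro sum.cong) (auto simp: hf_def)
  also have "\<dots> = - int (m - 1)" using m1 by simp
  finally have eq: "Tz m n (hf m) x = int m - hf m (A m) + - int (m - 1)" .
  have "int m - hf m (A m) + - int (m - 1) = 1" using m1 by (simp add: hf_def)
  then show ?thesis using eq by linarith
qed

lemma hf_nonneg: "0 \<le> hf m x"
  by (simp add: hf_def split: vert.splits)

definition Phi :: "config \<Rightarrow> int" where
  "Phi w = (\<Sum>x\<in>verts m n. hf m x * w x)"

lemma Phi_nonneg:
  assumes "\<And>x. x \<in> verts m n \<Longrightarrow> x \<noteq> A m \<Longrightarrow> 0 \<le> w x"
  shows "0 \<le> Phi w"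
  unfolding Phi_def
proof (rule sum_nonneg)
  fix x assume x: "x \<in> verts m n"
  show "0 \<le> hf m x * w x"
  proof (cases "x = A m")
    case True then show ?thesis by (simp add: hf_def)
  next
    case False then show ?thesis using assms x hf_nonneg by simp
  qed
qed

lemma Phi_step:
  assumes C: "C \<subseteq> verts m n - {A m}" "C \<noteq> {}"
  shows "Phi (w - toppling_set m n C) \<le> Phi w - 1"
proof -
  have Cv: "C \<subseteq> verts m n" using C by auto
  have "Phi (w - toppling_set m n C) = Phi w - (\<Sum>x\<in>verts m n. hf m x * Tz m n (ind C) x)"
    by (simp add: Phi_def toppling_set_Tz[OF Cv] algebra_simps sum_subtractf)
  also have "(\<Sum>x\<in>verts m n. hf m x * Tz m n (ind C) x) = (\<Sum>c\<in>verts m n. ind C c * Tz m n (hf m) c)"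
    by (rule Tz_adjoint)
  finally have eq: "Phi (w - toppling_set m n C) = Phi w - (\<Sum>c\<in>verts m n. ind C c * Tz m n (hf m) c)" .
  obtain c0 where c0: "c0 \<in> C" using C by auto
  have nn: "0 \<le> ind C c * Tz m n (hf m) c" if "c \<in> verts m n" for c
  proof (cases "c \<in> C")
    case True
    then have "c \<noteq> A m" using C by auto
    then have "1 \<le> Tz m n (hf m) c" using Th_pos that by blast
    then show ?thesis using True by (simp add: ind_def)
  qed (simp add: ind_def)
  have "ind C c0 * Tz m n (hf m) c0 \<le> (\<Sum>c\<in>verts m n. ind C c * Tz m n (hf m) c)"
    by (rule member_le_sum) (use c0 C nn in auto)
  moreover have "1 \<le> ind C c0 * Tz m n (hf m) c0"
  proof -
    have "c0 \<in> verts m n" "c0 \<noteq> A m" using c0 C by auto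
    then have "1 \<le> Tz m n (hf m) c0" using Th_pos by blast
    then show ?thesis using c0 by (simp add: ind_def)
  qed
  ultimately show ?thesis using eq by linarith
qed

lemma descent_aux:
  "\<forall>w. nat (Phi w) = k \<longrightarrow> (\<forall>x\<in>verts m n - {A m}. 0 \<le> w x) \<longrightarrow>
     (\<exists>p. parking m n p \<and> top_equiv m n w p \<and> w (A m) \<le> p (A m))"
proof (induction k rule: less_induct)
  case (less k)
  show ?case
  proof (intro allI impI)
    fix w assume k: "nat (Phi w) = k" and nn: "\<forall>x\<in>verts m n - {A m}. 0 \<le> w x"
    show "\<exists>p. parking m n p \<and> top_equiv m n w p \<and> w (A m) \<le> p (A m)"
    proof (cases "parking m n w")
      case True then show ?thesis using top_equiv_refl by blast
    next
      case False
      have nn2: "\<forall>c\<in>verts m n - {sink m}. 0 \<le> w c" using nn by (simp add: sink_eq)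
      from False nn2 have "\<exists>C. (C \<subseteq> verts m n - {sink m} \<and> C \<noteq> {}) \<and>
          \<not> (\<exists>c\<in>verts m n - {sink m}. (w - toppling_set m n C) c < 0)"
        unfolding parking_def by blast
      then obtain C where C: "C \<subseteq> verts m n - {A m}" "C \<noteq> {}"
        and C2: "\<forall>c\<in>verts m n - {A m}. 0 \<le> (w - toppling_set m n C) c"
        by (auto simp: sink_eq not_less)
      define w' where "w' = w - toppling_set m n C"
      have Cv: "C \<subseteq> verts m n" using C by auto
      have Phw: "0 \<le> Phi w" using Phi_nonneg nn by auto
      have Phw': "0 \<le> Phi w'" using Phi_nonneg C2 by (auto simp: w'_def)
      have "Phi w' \<le> Phi w - 1" unfolding w'_def by (rule Phi_step[OF C])
      then have lt: "nat (Phi w') < k" using k Phw Phw' by linarith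
      have nn': "\<forall>x\<in>verts m n - {A m}. 0 \<le> w' x" using C2 by (simp add: w'_def)
      obtain p where p: "parking m n p" "top_equiv m n w' p" "w' (A m) \<le> p (A m)"
        using less.IH[OF lt] nn' by blast
      have "top_equiv m n w w'"
        unfolding top_equiv_Tz w'_def
        by (rule exI[of _ "ind C"]) (simp add: toppling_set_Tz[OF Cv])
      then have te: "top_equiv m n w p" using p(2) top_equiv_trans by blast
      have "Tz m n (ind C) (A m) \<le> 0"
        using C m1 by (intro Tz_ind_outside) auto
      then have "w (A m) \<le> w' (A m)" by (simp add: w'_def toppling_set_Tz[OF Cv])
      then show ?thesis using p te by auto
    qed
  qed
qed

lemma descent:
  assumes "\<And>x. x \<in> verts m n \<Longrightarrow> x \<noteq> A m \<Longrightarrow> 0 \<le> w x"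
  shows "\<exists>p. parking m n p \<and> top_equiv m n w p \<and> w (A m) \<le> p (A m)"
  using descent_aux assms by blast

lemma raise: "\<exists>w. top_equiv m n u w \<and> (\<forall>x\<in>verts m n - {A m}. 0 \<le> w x)"
proof -
  define K where "K = (\<Sum>x\<in>verts m n. \<bar>u x\<bar>)"
  define w where "w = (\<lambda>x. u x + K * Tz m n (hf m) x)"
  have "top_equiv m n u w"
    unfolding top_equiv_Tz
    by (rule exI[of _ "\<lambda>c. - K * hf m c"]) (simp add: w_def Tz_smult[of m n "-K" "hf m", simplified])
  moreover have "0 \<le> w x" if x: "x \<in> verts m n - {A m}" for x
  proof -
    have uK: "\<bar>u x\<bar> \<le> K" unfolding K_def by (rule member_le_sum) (use x in auto)
    moreover have "1 \<le> Tz m n (hf m) x" using Th_pos x by auto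
    moreover have "0 \<le> K" unfolding K_def by (simp add: sum_nonneg)
    ultimately have "K \<le> K * Tz m n (hf m) x"
      by (metis mult.right_neutral mult_left_mono)
    moreover have "0 \<le> u x + \<bar>u x\<bar>" by simp
    ultimately show ?thesis using uK by (simp add: w_def)
  qed
  ultimately show ?thesis by blast
qed

lemma park_exists: "\<exists>p. parking m n p \<and> top_equiv m n u p"
proof -
  obtain w where w: "top_equiv m n u w" "\<forall>x\<in>verts m n - {A m}. 0 \<le> w x" using raise by blast
  obtain p where "parking m n p" "top_equiv m n w p" using descent w(2) by blast
  then show ?thesis using w(1) top_equiv_trans by blast
qed

lemma argmax_park:
  assumes p: "parking m n p" and zs: "z (A m) = 0"
    and pq: "\<And>x. x \<in> verts m n \<Longrightarrow> p x - q x = Tz m n z x"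
    and M: "M = Max (z ` verts m n)" and Mpos: "0 < M"
  shows "\<exists>c\<in>verts m n - {A m}. z c = M \<and> (\<forall>y\<in>verts m n. z y \<le> z c) \<and>
           q c + (Tz m n z c - Tz m n (ind {y\<in>verts m n. z y = M}) c) < 0"
proof -
  define C where "C = {y\<in>verts m n. z y = M}"
  have ne: "verts m n \<noteq> {}" using s_in[OF m1 n1] by blast
  have "M \<in> z ` verts m n" unfolding M by (rule Max_in) (use ne in auto)
  then obtain c0 where c0: "c0 \<in> verts m n" "z c0 = M" by auto
  have le: "\<And>y. y \<in> verts m n \<Longrightarrow> z y \<le> M" unfolding M by (rule Max_ge) auto
  have Cs: "C \<subseteq> verts m n - {A m}" using zs Mpos by (auto simp: C_def)
  have Cne: "C \<noteq> {}" using c0 by (auto simp: C_def)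
  obtain c where c: "c \<in> verts m n - {A m}" "p c - Tz m n (ind C) c < 0"
    using parking_witness[OF m1 n1 p Cs Cne] by blast
  have "c \<in> C"
  proof (rule ccontr)
    assume "c \<notin> C"
    then have "Tz m n (ind C) c \<le> 0" using c by (intro Tz_ind_outside) auto
    moreover have "0 \<le> p c" using parking_nonneg[OF m1 n1 p] c by auto
    ultimately show False using c by simp
  qed
  then have zc: "z c = M" by (simp add: C_def)
  have "p c = q c + Tz m n z c" using pq[of c] c by simp
  then show ?thesis using c zc le unfolding C_def by auto
qed

lemma nonpos_of_parking:
  assumes p: "parking m n p" and q: "\<And>x. x \<in> verts m n \<Longrightarrow> x \<noteq> A m \<Longrightarrow> 0 \<le> q x"
    and zs: "z (A m) = 0" and pq: "\<And>x. x \<in> verts m n \<Longrightarrow> p x - q x = Tz m n z x"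
  shows "\<And>x. x \<in> verts m n \<Longrightarrow> z x \<le> 0"
proof (rule ccontr)
  fix x assume x: "x \<in> verts m n" and "\<not> z x \<le> 0"
  define M where "M = Max (z ` verts m n)"
  have "z x \<le> M" unfolding M_def by (rule Max_ge) (use x in auto)
  then have Mpos: "0 < M" using \<open>\<not> z x \<le> 0\<close> by simp
  obtain c where c: "c \<in> verts m n - {A m}" "z c = M" "\<forall>y\<in>verts m n. z y \<le> z c"
     "q c + (Tz m n z c - Tz m n (ind {y\<in>verts m n. z y = M}) c) < 0"
    using argmax_park[OF p zs pq M_def Mpos] by blast
  have "Tz m n (ind {y\<in>verts m n. z y = z c}) c \<le> Tz m n z c"
    using c by (intro Tz_ind_le_max(2)) auto
  moreover have "0 \<le> q c" using q c by auto
  ultimately show False using c by simp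
qed

lemma parking_unique:
  assumes p: "parking m n p" and q: "parking m n q" and te: "top_equiv m n p q"
  shows "\<And>x. x \<in> verts m n \<Longrightarrow> p x = q x"
proof -
  obtain z where z: "\<And>x. x \<in> verts m n \<Longrightarrow> p x - q x = Tz m n z x"
    using te unfolding top_equiv_Tz by auto
  define z' where "z' = (\<lambda>c. z c - z (A m))"
  have z': "\<And>x. x \<in> verts m n \<Longrightarrow> p x - q x = Tz m n z' x"
    using z by (simp add: z'_def Tz_shift)
  have z's: "z' (A m) = 0" by (simp add: z'_def)
  have a: "\<And>x. x \<in> verts m n \<Longrightarrow> z' x \<le> 0"
    by (rule nonpos_of_parking[OF p _ z's z']) (use parking_nonneg[OF m1 n1 q] in auto)
  have b: "\<And>x. x \<in> verts m n \<Longrightarrow> - z' x \<le> 0"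
  proof (rule nonpos_of_parking[OF q, of p "\<lambda>c. - z' c"])
    show "\<And>x. x \<in> verts m n \<Longrightarrow> x \<noteq> A m \<Longrightarrow> 0 \<le> p x" using parking_nonneg[OF m1 n1 p] by auto
    show "- z' (A m) = 0" using z's by simp
    show "\<And>x. x \<in> verts m n \<Longrightarrow> q x - p x = Tz m n (\<lambda>c. - z' c) x"
      using z' by (simp add: Tz_neg) (metis minus_diff_eq)
  qed
  fix x assume x: "x \<in> verts m n"
  have "Tz m n z' x = Tz m n (\<lambda>c. 0) x"
    by (rule Tz_cong) (use a b in force)
  then show "p x = q x" using z'[OF x] by (simp add: Tz_zero)
qed

lemma park_ex1: "\<exists>!p. parking m n p \<and> top_equiv m n u p \<and> (\<forall>x. x \<notin> verts m n \<longrightarrow> p x = 0)"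
proof -
  obtain p where p: "parking m n p" "top_equiv m n u p" using park_exists by blast
  define p' where "p' = (\<lambda>x. if x \<in> verts m n then p x else 0)"
  have "parking m n p'" using p(1) parking_cong[OF m1 n1, of p' p] by (simp add: p'_def)
  moreover have "top_equiv m n u p'" using p(2) top_equiv_cong2[of m n p' p] by (simp add: p'_def)
  moreover have "\<forall>x. x \<notin> verts m n \<longrightarrow> p' x = 0" by (simp add: p'_def)
  moreover have "q1 = q2" if "parking m n q1 \<and> top_equiv m n u q1 \<and> (\<forall>x. x \<notin> verts m n \<longrightarrow> q1 x = 0)"
      "parking m n q2 \<and> top_equiv m n u q2 \<and> (\<forall>x. x \<notin> verts m n \<longrightarrow> q2 x = 0)" for q1 q2
  proof
    fix x
    have "top_equiv m n q1 q2" using that top_equiv_sym top_equiv_trans by blast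
    then show "q1 x = q2 x" using that parking_unique[of q1 q2 x] by (cases "x \<in> verts m n") auto
  qed
  ultimately show ?thesis by blast
qed

lemma park_spec: "parking m n (park m n u)" "top_equiv m n u (park m n u)"
  "\<And>x. x \<notin> verts m n \<Longrightarrow> park m n u x = 0"
  using theI'[OF park_ex1[of u]] unfolding park_def by auto

lemma park_unique:
  assumes "parking m n p" "top_equiv m n u p" "x \<in> verts m n"
  shows "park m n u x = p x"
proof -
  have "top_equiv m n (park m n u) p"
    using park_spec(2) assms(2) top_equiv_sym top_equiv_trans by blast
  then show ?thesis using parking_unique[OF park_spec(1) assms(1)] assms(3) by blast
qed

end


lemma effective_cong: "(\<And>x. x \<in> verts m n \<Longrightarrow> u x = u' x) \<Longrightarrow> effective m n u = effective m n u'"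
  unfolding effective_def using top_equiv_cong by blast

lemma effective_equiv: "top_equiv m n u u' \<Longrightarrow> effective m n u = effective m n u'"
  unfolding effective_def using top_equiv_sym top_equiv_trans by blast

context
  fixes m n :: nat
  assumes m1: "1 \<le> m" and n1: "1 \<le> n"
begin

lemma eff_iff: "effective m n u \<longleftrightarrow> 0 \<le> park m n u (A m)"
proof
  assume "effective m n u"
  then obtain w where w: "top_equiv m n u w" "nonneg m n w" unfolding effective_def by blast
  obtain p where p: "parking m n p" "top_equiv m n w p" "w (A m) \<le> p (A m)"
    using descent[OF m1 n1, of w] w(2) unfolding nonneg_def by blast
  have "park m n u (A m) = p (A m)"
    using park_unique[OF m1 n1 p(1)] w(1) p(2) top_equiv_trans s_in[OF m1 n1] by blast
  moreover have "0 \<le> w (A m)" using w(2) s_in[OF m1 n1] unfolding nonneg_def by blast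
  ultimately show "0 \<le> park m n u (A m)" using p(3) by simp
next
  assume a: "0 \<le> park m n u (A m)"
  have "nonneg m n (park m n u)"
    unfolding nonneg_def
  proof
    fix x assume "x \<in> verts m n"
    then show "0 \<le> park m n u x"
      using a parking_nonneg[OF m1 n1 park_spec(1)[OF m1 n1]] by (cases "x = A m") auto
  qed
  then show "effective m n u" unfolding effective_def using park_spec(2)[OF m1 n1] by blast
qed

lemma park_ge:
  assumes "top_equiv m n u r" "\<And>x. x \<in> verts m n \<Longrightarrow> x \<noteq> A m \<Longrightarrow> 0 \<le> r x"
  shows "r (A m) \<le> park m n u (A m)"
proof -
  obtain p where p: "parking m n p" "top_equiv m n r p" "r (A m) \<le> p (A m)"
    using descent[OF m1 n1, of r] assms(2) by blast
  have "park m n u (A m) = p (A m)"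
    using park_unique[OF m1 n1 p(1)] assms(1) p(2) top_equiv_trans s_in[OF m1 n1] by blast
  then show ?thesis using p(3) by simp
qed

lemma park_of_parking:
  assumes "parking m n p" "x \<in> verts m n"
  shows "park m n p x = p x"
  using park_unique[OF m1 n1 assms(1) top_equiv_refl assms(2)] .

lemma SL:
  assumes v: "parking m n v" and j: "1 \<le> j" "j \<le> n" and vb: "v (B j) = 0"
  shows "\<exists>U. U \<subseteq> verts m n - {A m} \<and> B j \<in> U \<and>
     (\<forall>x\<in>verts m n. park m n (v - e (B j)) x = v x - e (B j) x + Tz m n (ind U) x)"
proof -
  define b where "b = B j"
  have bv: "b \<in> verts m n" "b \<noteq> A m" using j by (auto simp: b_def)
  define P where "P = park m n (v - e b)"
  have Pp: "parking m n P" unfolding P_def by (rule park_spec(1)[OF m1 n1])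
  obtain z where z: "\<And>x. x \<in> verts m n \<Longrightarrow> (v - e b) x - P x = Tz m n z x"
    using park_spec(2)[OF m1 n1, of "v - e b"] unfolding top_equiv_Tz P_def by blast
  define z' where "z' = (\<lambda>c. - (z c - z (A m)))"
  have z'eq: "P x - (v x - e b x) = Tz m n z' x" if x: "x \<in> verts m n" for x
  proof -
    have "Tz m n z' x = - Tz m n z x" unfolding z'_def by (simp only: Tz_neg Tz_shift[OF x])
    then show ?thesis using z[OF x] by simp
  qed
  have z's: "z' (A m) = 0" by (simp add: z'_def)
  have nonneg_z': "\<And>x. x \<in> verts m n \<Longrightarrow> 0 \<le> z' x"
  proof -
    fix x assume x: "x \<in> verts m n"
    have "- z' x \<le> 0"
    proof (rule nonpos_of_parking[OF m1 n1 v, of "\<lambda>x. P x + e b x" "\<lambda>c. - z' c", OF _ _ _ x])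
      show "\<And>x. x \<in> verts m n \<Longrightarrow> x \<noteq> A m \<Longrightarrow> 0 \<le> P x + e b x"
        using parking_nonneg[OF m1 n1 Pp] by (simp add: unit_conf_def)
      show "- z' (A m) = 0" using z's by simp
      show "\<And>x. x \<in> verts m n \<Longrightarrow> v x - (P x + e b x) = Tz m n (\<lambda>c. - z' c) x"
      proof -
        fix x assume x: "x \<in> verts m n"
        show "v x - (P x + e b x) = Tz m n (\<lambda>c. - z' c) x"
          using z'eq[OF x] unfolding Tz_neg by linarith
      qed
    qed
    then show "0 \<le> z' x" by simp
  qed
  define M where "M = Max (z' ` verts m n)"
  have Mge: "\<And>y. y \<in> verts m n \<Longrightarrow> z' y \<le> M" unfolding M_def by (rule Max_ge) auto
  have Mpos: "0 < M"
  proof (rule ccontr)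
    assume "\<not> 0 < M"
    then have z0: "\<And>y. y \<in> verts m n \<Longrightarrow> z' y = 0" using Mge nonneg_z' by force
    have "Tz m n z' b = Tz m n (\<lambda>c. 0) b" by (rule Tz_cong) (use z0 in auto)
    then have "P b = v b - 1" using z'eq[OF bv(1)] by (simp add: Tz_zero unit_conf_def)
    then have "P b < 0" using vb by (simp add: b_def)
    then show False using parking_nonneg[OF m1 n1 Pp bv] by simp
  qed
  obtain c where c: "c \<in> verts m n - {A m}" "z' c = M" "\<forall>y\<in>verts m n. z' y \<le> z' c"
    "(v - e b) c + (Tz m n z' c - Tz m n (ind {y\<in>verts m n. z' y = M}) c) < 0"
    using argmax_park[OF m1 n1 Pp z's _ M_def Mpos, of "v - e b"] z'eq by auto
  define C where "C = {y\<in>verts m n. z' y = M}"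
  have dge: "Tz m n (ind C) c \<le> Tz m n z' c"
    using Tz_ind_le_max(2)[of c m n z'] c by (simp add: C_def)
  have cb: "c = b"
  proof (rule ccontr)
    assume "c \<noteq> b"
    then have "0 \<le> (v - e b) c" using parking_nonneg[OF m1 n1 v, of c] c by (simp add: unit_conf_def)
    then show False using c dge by (simp add: C_def)
  qed
  have M1: "M = 1"
  proof (rule ccontr)
    assume "M \<noteq> 1"
    then have M2: "2 \<le> M" using Mpos by simp
    have sn: "A m \<in> nbrs m n b" using j m1 by (simp add: b_def nbrs_B)
    have "Tz m n (ind C) c + (z' c - z' (A m) - (1 - ind C (A m))) \<le> Tz m n z' c"
      using Tz_ind_le_max(1)[of c m n z' "A m"] c cb sn by (simp add: C_def)
    moreover have "ind C (A m) = 0" using z's Mpos by (simp add: C_def ind_def)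
    ultimately have "M - 1 \<le> Tz m n z' c - Tz m n (ind C) c" using c z's by simp
    moreover have "(v - e b) c = -1" using cb vb by (simp add: b_def unit_conf_def)
    ultimately show False using c M2 by (simp add: C_def)
  qed
  have z'ind: "\<And>y. y \<in> verts m n \<Longrightarrow> z' y = ind C y"
  proof -
    fix y assume y: "y \<in> verts m n"
    have "0 \<le> z' y" "z' y \<le> 1" using nonneg_z'[OF y] Mge[OF y] M1 by auto
    then show "z' y = ind C y" using y M1 by (auto simp: C_def ind_def)
  qed
  have "C \<subseteq> verts m n - {A m}" using z's Mpos by (auto simp: C_def)
  moreover have "b \<in> C" using c cb by (simp add: C_def)
  moreover have "\<forall>x\<in>verts m n. P x = v x - e b x + Tz m n (ind C) x"
  proof
    fix x assume x: "x \<in> verts m n"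
    have "Tz m n z' x = Tz m n (ind C) x" by (rule Tz_cong) (rule z'ind)
    then show "P x = v x - e b x + Tz m n (ind C) x" using z'eq[OF x] by simp
  qed
  ultimately show ?thesis unfolding P_def b_def by blast
qed

end


context
  fixes m n :: nat
  assumes m1: "1 \<le> m" and n1: "1 \<le> n"
begin

lemma Tz_ind_A:
  assumes "1 \<le> i" "i \<le> m"
  shows "Tz m n (ind U) (A i) = (\<Sum>y\<in>B ` {1..n}. ind U (A i) - ind U y)"
  using assms by (simp add: Tz_form nbrs_A)

lemma Tz_ind_B:
  assumes "1 \<le> j" "j \<le> n"
  shows "Tz m n (ind U) (B j) = (\<Sum>y\<in>A ` {1..m}. ind U (B j) - ind U y)"
  using assms by (simp add: Tz_form nbrs_B)

lemma sum_ind_ge: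
  assumes "finite S" "y0 \<in> S" "y0 \<in> U"
  shows "1 \<le> (\<Sum>y\<in>S. ind U y)"
proof -
  have "ind U y0 \<le> (\<Sum>y\<in>S. ind U y)"
    by (rule member_le_sum) (use assms in \<open>auto simp: ind_def\<close>)
  then show ?thesis using assms by (simp add: ind_def)
qed

lemma sink_drop:
  assumes v: "parking m n v" and j: "1 \<le> j" "j \<le> n" and vb: "v (B j) = 0"
  shows "park m n (v - e (B j)) (A m) \<le> v (A m) - 1"
proof -
  obtain U where U: "U \<subseteq> verts m n - {A m}" "B j \<in> U"
    "\<forall>x\<in>verts m n. park m n (v - e (B j)) x = v x - e (B j) x + Tz m n (ind U) x"
    using SL[OF m1 n1 v j vb] by blast
  have "Tz m n (ind U) (A m) = (\<Sum>y\<in>B ` {1..n}. ind U (A m) - ind U y)"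
    using m1 by (rule Tz_ind_A) simp
  also have "\<dots> = - (\<Sum>y\<in>B ` {1..n}. ind U y)"
  proof -
    have "ind U (A m) = 0" using U(1) by (auto simp: ind_def)
    then show ?thesis by (simp add: sum_negf)
  qed
  finally have "Tz m n (ind U) (A m) \<le> -1"
    using sum_ind_ge[of "B ` {1..n}" "B j" U] U(2) j by simp
  then show ?thesis using U(3) m1 by (simp add: unit_conf_def)
qed

lemma lemma_A:
  assumes v: "parking m n v" and i: "1 \<le> i" "i < m" and va: "v (A i) = 0"
    and j: "1 \<le> j" "j \<le> n" and vb: "v (B j) = 0"
  shows "park m n (v - e (B j)) (A m) \<le> park m n (v - e (A i)) (A m)"
proof -
  define a where "a = A i"
  define b where "b = B j"
  define P where "P = park m n (v - e b)"
  have Pp: "parking m n P" unfolding P_def by (rule park_spec(1)[OF m1 n1])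
  obtain U where U: "U \<subseteq> verts m n - {A m}" "b \<in> U"
    and PU: "\<And>x. x \<in> verts m n \<Longrightarrow> P x = v x - e b x + Tz m n (ind U) x"
    using SL[OF m1 n1 v j vb] unfolding P_def b_def by blast
  have av: "a \<in> verts m n" "a \<noteq> A m" "a \<noteq> b" using i by (auto simp: a_def b_def)
  have bv: "b \<in> verts m n" "b \<noteq> A m" using j by (auto simp: b_def)
  have TA: "Tz m n (ind U) a = (\<Sum>y\<in>B ` {1..n}. ind U a - ind U y)"
    unfolding a_def by (rule Tz_ind_A) (use i in auto)
  have aU: "a \<in> U"
  proof (rule ccontr)
    assume "a \<notin> U"
    then have "Tz m n (ind U) a = - (\<Sum>y\<in>B ` {1..n}. ind U y)"
      using TA by (simp add: ind_def sum_negf)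
    then have "Tz m n (ind U) a \<le> -1"
      using sum_ind_ge[of "B ` {1..n}" b U] U(2) j by (simp add: b_def)
    then have "P a < 0" using PU[OF av(1)] va av by (simp add: a_def unit_conf_def)
    then show False using parking_nonneg[OF m1 n1 Pp av(1,2)] by simp
  qed
  have Pa: "P a = (\<Sum>y\<in>B ` {1..n}. 1 - ind U y)"
    using PU[OF av(1)] TA aU va av by (simp add: a_def unit_conf_def ind_def)
  have tequiv: "top_equiv m n (v - e a) (\<lambda>x. v x - e a x + Tz m n z x)" for z
    unfolding top_equiv_Tz by (rule exI[of _ "\<lambda>c. - z c"]) (simp add: Tz_neg)
  show ?thesis
  proof (cases "1 \<le> P a")
    case True
    define r where "r = (\<lambda>x. v x - e a x + Tz m n (ind U) x)"
    have "r (A m) \<le> park m n (v - e a) (A m)"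
    proof (rule park_ge[OF m1 n1])
      show "top_equiv m n (v - e a) r" unfolding r_def by (rule tequiv)
      fix x assume x: "x \<in> verts m n" "x \<noteq> A m"
      have "r x = P x + e b x - e a x" using PU[OF x(1)] by (simp add: r_def)
      then show "0 \<le> r x"
        using True parking_nonneg[OF m1 n1 Pp x] by (auto simp: unit_conf_def)
    qed
    moreover have "r (A m) = P (A m)" using PU[of "A m"] av bv m1 by (simp add: r_def unit_conf_def)
    ultimately show ?thesis by (simp add: P_def a_def b_def)
  next
    case False
    have nnt: "\<And>y. y \<in> B ` {1..n} \<Longrightarrow> 0 \<le> 1 - ind U y" by (simp add: ind_def)
    have "P a = 0" using False parking_nonneg[OF m1 n1 Pp av(1,2)] by simp
    then have allB: "\<And>y. y \<in> B ` {1..n} \<Longrightarrow> ind U y = 1"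
      using Pa sum_nonneg_eq_0_iff[of "B ` {1..n}" "\<lambda>y. 1 - ind U y"] nnt by auto
    define z where "z = (\<lambda>c. ind U c + ind {a} c)"
    define r where "r = (\<lambda>x. v x - e a x + Tz m n z x)"
    have rP: "r x = P x + e b x - e a x + Tz m n (ind {a}) x" if "x \<in> verts m n" for x
      using PU[OF that] by (simp add: r_def z_def Tz_add)
    have "r (A m) \<le> park m n (v - e a) (A m)"
    proof (rule park_ge[OF m1 n1])
      show "top_equiv m n (v - e a) r" unfolding r_def by (rule tequiv)
      fix x assume x: "x \<in> verts m n" "x \<noteq> A m"
      show "0 \<le> r x"
        using x(1)
      proof (cases rule: verts_cases)
        case Sk then show ?thesis using x by simp
      next
        case (Ai i')
        have T: "Tz m n (ind {a}) x = (\<Sum>y\<in>B ` {1..n}. ind {a} (A i') - ind {a} y)"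
          using Ai by (simp add: Tz_ind_A)
        show ?thesis
        proof (cases "i' = i")
          case True
          have "Tz m n (ind {a}) x = (\<Sum>y\<in>B ` {1..n}. 1)"
            unfolding T using True by (intro sum.cong) (auto simp: ind_def a_def)
          then have "Tz m n (ind {a}) x = int n" by (simp add: card_image inj_on_def)
          then show ?thesis using rP[OF x(1)] \<open>P a = 0\<close> True Ai n1 av
            by (simp add: a_def b_def unit_conf_def)
        next
          case False
          have "Tz m n (ind {a}) x = 0"
            unfolding T using False by (intro sum.neutral) (auto simp: ind_def a_def)
          then show ?thesis using rP[OF x(1)] parking_nonneg[OF m1 n1 Pp x] False Ai
            by (simp add: a_def b_def unit_conf_def)
        qed
      next
        case (Bj j')
        have "Tz m n (ind {a}) x = (\<Sum>y\<in>A ` {1..m}. ind {a} (B j') - ind {a} y)"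
          using Bj by (simp add: Tz_ind_B)
        also have "\<dots> = - (\<Sum>y\<in>A ` {1..m}. ind {a} y)" by (simp add: ind_def a_def sum_negf)
        also have "(\<Sum>y\<in>A ` {1..m}. ind {a} y) = 1"
          using i by (simp add: ind_def a_def sum.delta)
        finally have T: "Tz m n (ind {a}) x = -1" .
        show ?thesis
        proof (cases "j' = j")
          case True
          then show ?thesis using rP[OF x(1)] T parking_nonneg[OF m1 n1 Pp x] Bj
            by (simp add: a_def b_def unit_conf_def)
        next
          case False
          have "ind U x = 1" using allB Bj by auto
          then have xU: "x \<in> U" by (simp add: ind_def split: if_splits)
          have "Tz m n (ind U) x = (\<Sum>y\<in>A ` {1..m}. ind U (B j') - ind U y)"
            using Bj by (simp add: Tz_ind_B)
          also have "\<dots> = (\<Sum>y\<in>A ` {1..m}. 1 - ind U y)" using xU Bj by (simp add: ind_def)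
          finally have TU: "Tz m n (ind U) x = (\<Sum>y\<in>A ` {1..m}. 1 - ind U y)" .
          have "1 - ind U (A m) \<le> (\<Sum>y\<in>A ` {1..m}. 1 - ind U y)"
            by (rule member_le_sum) (use m1 in \<open>auto simp: ind_def\<close>)
          moreover have "ind U (A m) = 0" using U(1) by (auto simp: ind_def)
          ultimately have "1 \<le> Tz m n (ind U) x" using TU by simp
          then have "1 \<le> P x" using PU[OF x(1)] parking_nonneg[OF m1 n1 v x] False Bj
            by (simp add: b_def unit_conf_def)
          then show ?thesis using rP[OF x(1)] T False Bj
            by (simp add: a_def b_def unit_conf_def)
        qed
      qed
    qed
    moreover have "Tz m n (ind {a}) (A m) = 0"
    proof -
      have "Tz m n (ind {a}) (A m) = (\<Sum>y\<in>B ` {1..n}. ind {a} (A m) - ind {a} y)"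
        using m1 by (simp add: Tz_ind_A)
      also have "\<dots> = 0" using av by (intro sum.neutral) (auto simp: ind_def a_def)
      finally show ?thesis .
    qed
    then have "r (A m) = P (A m)" using rP[of "A m"] av bv m1 by (simp add: unit_conf_def)
    ultimately show ?thesis by (simp add: P_def a_def b_def)
  qed
qed

end


definition LB :: "nat \<Rightarrow> nat \<Rightarrow> config \<Rightarrow> int \<Rightarrow> bool" where
  "LB m n u k \<longleftrightarrow> (\<forall>g. nonneg m n g \<and> degree m n g \<le> k \<longrightarrow> effective m n (u - g))"

lemma degree_nonneg: "nonneg m n g \<Longrightarrow> 0 \<le> degree m n g"
  unfolding nonneg_def degree_def by (rule sum_nonneg) auto

lemma LB_neg: "k < 0 \<Longrightarrow> LB m n u k"
  unfolding LB_def using degree_nonneg by fastforce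

lemma LB_eff: "0 \<le> k \<Longrightarrow> LB m n u k \<Longrightarrow> effective m n u"
proof -
  assume k: "0 \<le> k" and L: "LB m n u k"
  have "nonneg m n (\<lambda>_. 0)" by (simp add: nonneg_def)
  moreover have "degree m n (\<lambda>_. 0) \<le> k" using k by (simp add: degree_def)
  ultimately have "effective m n (u - (\<lambda>_. 0))" using L unfolding LB_def by blast
  moreover have "u - (\<lambda>_. 0) = u" by (simp add: fun_eq_iff)
  ultimately show ?thesis by simp
qed

lemma LB_sub:
  assumes x: "x \<in> verts m n" and L: "LB m n u k"
  shows "LB m n (u - e x) (k - 1)"
  unfolding LB_def
proof (intro allI impI)
  fix g assume g: "nonneg m n g \<and> degree m n g \<le> k - 1"
  define g' where "g' = (\<lambda>y. g y + e x y)"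
  have "nonneg m n g'" using g by (simp add: nonneg_def g'_def unit_conf_def)
  moreover have "degree m n g' \<le> k" using g x by (simp add: g'_def degree_add degree_e)
  ultimately have "effective m n (u - g')" using L unfolding LB_def by blast
  moreover have "u - g' = u - e x - g" by (simp add: g'_def fun_eq_iff)
  ultimately show "effective m n (u - e x - g)" by simp
qed

lemma LB_equiv:
  assumes te: "top_equiv m n u u'" and L: "LB m n u k"
  shows "LB m n u' k"
  unfolding LB_def
proof (intro allI impI)
  fix g assume g: "nonneg m n g \<and> degree m n g \<le> k"
  then have "effective m n (u - g)" using L unfolding LB_def by blast
  moreover have "top_equiv m n (u - g) (u' - g)" using te by (rule top_equiv_diff)
  ultimately show "effective m n (u' - g)" using effective_equiv by blast
qed

lemma LB_from:
  assumes eff: "effective m n v" and X: "\<And>x. x \<in> verts m n \<Longrightarrow> LB m n (v - e x) (k - 1)"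
  shows "LB m n v k"
  unfolding LB_def
proof (intro allI impI)
  fix g assume g: "nonneg m n g \<and> degree m n g \<le> k"
  show "effective m n (v - g)"
  proof (cases "\<forall>x\<in>verts m n. g x = 0")
    case True
    then show ?thesis using eff effective_cong[of m n "v - g" v] by simp
  next
    case False
    then obtain x where x: "x \<in> verts m n" "g x \<noteq> 0" by blast
    then have gx: "1 \<le> g x" using g unfolding nonneg_def by force
    define g' where "g' = g - e x"
    have "nonneg m n g'" using g gx by (auto simp: nonneg_def g'_def unit_conf_def)
    moreover have "degree m n g' \<le> k - 1" using g x by (simp add: g'_def degree_diff degree_e)
    ultimately have "effective m n (v - e x - g')" using X[OF x(1)] unfolding LB_def by blast
    moreover have "v - e x - g' = v - g" by (simp add: g'_def fun_eq_iff)
    ultimately show ?thesis by simp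
  qed
qed

definition sw :: "vert \<Rightarrow> vert \<Rightarrow> vert \<Rightarrow> vert" where
  "sw a b x = (if x = a then b else if x = b then a else x)"

lemma sw_sw[simp]: "sw a b (sw a b x) = x"
  by (simp add: sw_def)

context
  fixes m n j j' :: nat
  assumes j: "1 \<le> j" "j \<le> n" and j': "1 \<le> j'" "j' \<le> n"
begin

abbreviation "\<sigma> \<equiv> sw (B j) (B j')"

lemma sw_verts: "\<sigma> x \<in> verts m n \<longleftrightarrow> x \<in> verts m n"
  using j j' by (cases x) (auto simp: sw_def)

lemma sw_bij: "bij_betw \<sigma> (verts m n) (verts m n)"
  by (rule bij_betw_byWitness[of _ \<sigma>]) (auto simp: sw_verts)

definition "swn k = (if k = j then j' else if k = j' then j else k)"

lemma sw_A[simp]: "\<sigma> (A i) = A i" by (simp add: sw_def)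
lemma sw_B[simp]: "\<sigma> (B k) = B (swn k)" by (simp add: sw_def swn_def)
lemma swn_range[simp]: "(1 \<le> swn k \<and> swn k \<le> n) \<longleftrightarrow> (1 \<le> k \<and> k \<le> n)"
  using j j' by (simp add: swn_def)

lemma toppling_sw: "toppling m n (\<sigma> c) (\<sigma> x) = toppling m n c x"
proof -
  have v: "vdeg m n (\<sigma> c) = vdeg m n c" by (cases c) (simp_all add: vdeg_def)
  have inj: "\<sigma> x = \<sigma> c \<longleftrightarrow> x = c" by (metis sw_sw)
  have ee: "e (\<sigma> c) (\<sigma> x) = e c x" by (simp only: unit_conf_def inj)
  have ad: "adj m n (\<sigma> c) (\<sigma> x) = adj m n c x"
    by (cases c; cases x) (simp_all only: sw_A sw_B adj_AB adj_BA adj_AA adj_BB swn_range)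
  show ?thesis by (simp add: toppling_def v ee ad)
qed

lemma Tz_sw: "Tz m n z (\<sigma> x) = Tz m n (\<lambda>c. z (\<sigma> c)) x"
proof -
  have "Tz m n z (\<sigma> x) = (\<Sum>c\<in>verts m n. z (\<sigma> c) * toppling m n (\<sigma> c) (\<sigma> x))"
    unfolding Tz_def by (rule sum.reindex_bij_betw[OF sw_bij, symmetric])
  then show ?thesis by (simp add: toppling_sw Tz_def)
qed

lemma sum_sw: "(\<Sum>x\<in>verts m n. g (\<sigma> x)) = (\<Sum>x\<in>verts m n. g x)"
  by (rule sum.reindex_bij_betw[OF sw_bij])

lemma effective_sw: "effective m n u \<Longrightarrow> effective m n (\<lambda>x. u (\<sigma> x))"
proof -
  assume "effective m n u"
  then obtain w z where w: "nonneg m n w" and z: "\<And>x. x \<in> verts m n \<Longrightarrow> u x - w x = Tz m n z x"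
    unfolding effective_def top_equiv_Tz by blast
  have "nonneg m n (\<lambda>x. w (\<sigma> x))" using w by (simp add: nonneg_def sw_verts)
  moreover have "top_equiv m n (\<lambda>x. u (\<sigma> x)) (\<lambda>x. w (\<sigma> x))"
    unfolding top_equiv_Tz
    by (rule exI[of _ "\<lambda>c. z (\<sigma> c)"]) (simp add: z sw_verts Tz_sw[symmetric])
  ultimately show ?thesis unfolding effective_def by blast
qed

lemma LB_sw:
  assumes L: "LB m n u k"
  shows "LB m n (\<lambda>x. u (\<sigma> x)) k"
  unfolding LB_def
proof (intro allI impI)
  fix g assume g: "nonneg m n g \<and> degree m n g \<le> k"
  define g' where "g' = (\<lambda>x. g (\<sigma> x))"
  have "nonneg m n g'" using g by (simp add: nonneg_def g'_def sw_verts)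
  moreover have "degree m n g' = degree m n g" by (simp add: degree_def g'_def sum_sw)
  ultimately have "effective m n (u - g')" using L g unfolding LB_def by auto
  then have "effective m n (\<lambda>x. (u - g') (\<sigma> x))" by (rule effective_sw)
  moreover have "(\<lambda>x. (u - g') (\<sigma> x)) = (\<lambda>x. u (\<sigma> x)) - g" by (simp add: g'_def fun_eq_iff)
  ultimately show "effective m n ((\<lambda>x. u (\<sigma> x)) - g)" by simp
qed

lemma LB_swap:
  assumes vb: "v (B j) = v (B j')" and L: "LB m n (v - e (B j)) k"
  shows "LB m n (v - e (B j')) k"
proof -
  have "(\<lambda>x. (v - e (B j)) (\<sigma> x)) = v - e (B j')"
  proof
    fix x show "(v - e (B j)) (\<sigma> x) = (v - e (B j')) x"
      using vb by (cases "x = B j"; cases "x = B j'") (simp_all add: sw_def unit_conf_def)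
  qed
  then show ?thesis using LB_sw[OF L] by simp
qed

end

lemma parking_down:
  assumes v: "parking m n v" and y: "1 \<le> v y"
  shows "parking m n (v - e y)"
  unfolding parking_def
proof (intro conjI allI impI ballI)
  fix c assume c: "c \<in> verts m n - {sink m}"
  have "0 \<le> v c" using v c unfolding parking_def by blast
  then show "0 \<le> (v - e y) c" using y by (cases "c = y") (simp_all add: unit_conf_def)
next
  fix C assume C: "C \<subseteq> verts m n - {sink m} \<and> C \<noteq> {}"
  then obtain c where c: "c \<in> verts m n - {sink m}" "(v - toppling_set m n C) c < 0"
    using v unfolding parking_def by blast
  have "(v - e y - toppling_set m n C) c \<le> (v - toppling_set m n C) c"
    by (simp add: unit_conf_def)
  then show "\<exists>c\<in>verts m n - {sink m}. (v - e y - toppling_set m n C) c < 0"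
    using c by force
qed



context
  fixes m n :: nat
  assumes m1: "1 \<le> m" and n1: "1 \<le> n"
begin

lemma nonneg_parking: "parking m n v \<Longrightarrow> 0 \<le> v (A m) \<Longrightarrow> nonneg m n v"
  unfolding nonneg_def using parking_nonneg[OF m1 n1] by (metis)

lemma effective_parking: "parking m n v \<Longrightarrow> 0 \<le> v (A m) \<Longrightarrow> effective m n v"
  unfolding effective_def using nonneg_parking top_equiv_refl by blast

lemma KL:
  "\<forall>v j k. parking m n v \<and> 0 \<le> v (A m) \<and> 1 \<le> j \<and> j \<le> n \<and> v (B j) = 0 \<and> degree m n v = int d
     \<and> LB m n (v - e (B j)) (k - 1) \<longrightarrow> LB m n v k"
proof (induction d rule: less_induct)
  case (less d)
  show ?case
  proof (intro allI impI)
    fix v j k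
    assume asm: "parking m n v \<and> 0 \<le> v (A m) \<and> 1 \<le> j \<and> j \<le> n \<and> v (B j) = 0 \<and> degree m n v = int d
     \<and> LB m n (v - e (B j)) (k - 1)"
    then have v: "parking m n v" and vs: "0 \<le> v (A m)" and j: "1 \<le> j" "j \<le> n"
      and vb: "v (B j) = 0" and dv: "degree m n v = int d" and H: "LB m n (v - e (B j)) (k - 1)"
      by auto
    define b where "b = B j"
    have bv: "b \<in> verts m n" "b \<noteq> A m" using j by (auto simp: b_def)
    have veff: "effective m n v" using effective_parking[OF v vs] .
    have X: "LB m n (v - e x) (k - 1)" if x: "x \<in> verts m n" for x
    proof (cases "k - 1 < 0")
      case True then show ?thesis by (rule LB_neg)
    next
      case False
      then have k1: "1 \<le> k" by simp
      have effb: "effective m n (v - e b)" using LB_eff[OF _ H] False by (simp add: b_def)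
      have Pb: "0 \<le> park m n (v - e b) (A m)" using effb eff_iff[OF m1 n1] by blast
      have G1: "LB m n (v - e y) (k - 1)" if y: "y \<in> verts m n" "1 \<le> v y" for y
      proof -
        define v' where "v' = v - e y"
        have v'p: "parking m n v'" unfolding v'_def by (rule parking_down[OF v y(2)])
        have yb: "y \<noteq> b" using y vb by (auto simp: b_def)
        have v's: "0 \<le> v' (A m)" using vs y by (cases "y = A m") (auto simp: v'_def unit_conf_def)
        have v'b: "v' (B j) = 0" using vb yb by (simp add: v'_def unit_conf_def b_def)
        have dv': "degree m n v' = int d - 1" using dv y by (simp add: v'_def degree_diff degree_e)
        have "0 \<le> degree m n v'" by (rule degree_nonneg[OF nonneg_parking[OF v'p v's]])
        then have d1: "1 \<le> d" using dv' by simp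
        have dv'': "degree m n v' = int (d - 1)" using dv' d1 by simp
        have "LB m n (v - e b - e y) (k - 1 - 1)" by (rule LB_sub[OF y(1) H[folded b_def]])
        moreover have "v - e b - e y = v' - e (B j)" by (simp add: v'_def b_def fun_eq_iff)
        ultimately have "LB m n (v' - e (B j)) (k - 1 - 1)" by simp
        moreover have "d - 1 < d" using d1 by simp
        ultimately have "LB m n v' (k - 1)"
          using less.IH[of "d - 1", rule_format, of v' j "k - 1"] v'p v's j v'b dv'' by simp
        then show ?thesis by (simp add: v'_def)
      qed
      have Bcase: "LB m n (v - e (B j')) (k - 1)" if j': "1 \<le> j'" "j' \<le> n" for j'
      proof (cases "v (B j') = 0")
        case True
        show ?thesis by (rule LB_swap[OF j j' _ H]) (simp add: vb True)
      next
        case False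
        then have "1 \<le> v (B j')" using parking_nonneg[OF m1 n1 v, of "B j'"] j' by simp
        then show ?thesis using G1 j' by simp
      qed
      show ?thesis
        using x
      proof (cases rule: verts_cases)
        case Sk
        show ?thesis
        proof (cases "1 \<le> v (A m)")
          case True then show ?thesis using G1 Sk x by simp
        next
          case False
          then have "v (A m) = 0" using vs by simp
          then have "park m n (v - e b) (A m) \<le> -1"
            using sink_drop[OF m1 n1 v j vb] by (simp add: b_def)
          then show ?thesis using Pb by simp
        qed
      next
        case (Bj j')
        then show ?thesis using Bcase by simp
      next
        case (Ai i)
        show ?thesis
        proof (cases "1 \<le> v x")
          case True then show ?thesis using G1 x by simp
        next
          case False
          then have va: "v (A i) = 0" using parking_nonneg[OF m1 n1 v x] Ai by simp
          define w where "w = park m n (v - e x)"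
          have wp: "parking m n w" unfolding w_def by (rule park_spec(1)[OF m1 n1])
          have tw: "top_equiv m n (v - e x) w" unfolding w_def by (rule park_spec(2)[OF m1 n1])
          have ws: "0 \<le> w (A m)"
            using lemma_A[OF m1 n1 v Ai(2,3) va j vb] Pb Ai by (simp add: w_def b_def)
          obtain j'' where j'': "j'' \<in> {1..n}" "w (B j'') = 0"
            using parking_B_zero[OF m1 n1 wp] by blast
          have dw: "degree m n w = int d - 1"
            using degree_equiv[OF tw] dv x by (simp add: degree_diff degree_e)
          have "0 \<le> degree m n w" by (rule degree_nonneg[OF nonneg_parking[OF wp ws]])
          then have d1: "1 \<le> d" using dw by simp
          have dw': "degree m n w = int (d - 1)" using dw d1 by simp
          have L1: "LB m n (v - e (B j'')) (k - 1)" using Bcase j'' by simp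
          have "LB m n (v - e (B j'') - e x) (k - 1 - 1)" by (rule LB_sub[OF x L1])
          moreover have "v - e (B j'') - e x = v - e x - e (B j'')" by (simp add: fun_eq_iff)
          moreover have "top_equiv m n (v - e x - e (B j'')) (w - e (B j''))"
            by (rule top_equiv_diff[OF tw])
          ultimately have "LB m n (w - e (B j'')) (k - 1 - 1)" using LB_equiv by metis
          moreover have "d - 1 < d" using d1 by simp
          ultimately have "LB m n w (k - 1)"
            using less.IH[of "d - 1", rule_format, of w j'' "k - 1"] wp ws j'' dw' by simp
          then show ?thesis using LB_equiv top_equiv_sym[OF tw] by blast
        qed
      qed
    qed
    show "LB m n v k" by (rule LB_from[OF veff X])
  qed
qed

end


lemma steps_park: "\<exists>w. steps m n (park m n v) xs = park m n w"
  by (induction xs arbitrary: v) auto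

lemma steps_snoc: "steps m n v (xs @ [i]) = park m n (steps m n v xs - e (B i))"
  by (induction xs arbitrary: v) auto

lemma f_of_Nil: "f_of [] = (\<lambda>_. 0)" by (simp add: f_of_def)
lemma f_of_Cons: "f_of (i # xs) = (\<lambda>x. e (B i) x + f_of xs x)" by (simp add: f_of_def)
lemma f_of_snoc: "f_of (xs @ [i]) = (\<lambda>x. f_of xs x + e (B i) x)" by (simp add: f_of_def)

lemma nonneg_f_of: "nonneg m n (f_of xs)"
  by (induction xs) (auto simp: nonneg_def f_of_Nil f_of_Cons unit_conf_def)

lemma degree_zero: "degree m n (\<lambda>_. 0) = 0" by (simp add: degree_def)

lemma degree_f_of: "set xs \<subseteq> {1..n} \<Longrightarrow> degree m n (f_of xs) = int (length xs)"
  by (induction xs) (simp_all add: f_of_Nil f_of_Cons degree_add degree_e degree_zero)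

context
  fixes m n :: nat
  assumes m1: "1 \<le> m" and n1: "1 \<le> n"
begin

lemma v_of_parking: "parking m n (v_of m n u xs)"
  using steps_park[of m n u xs] park_spec(1)[OF m1 n1] by (auto simp: v_of_def)

lemma v_of_snoc: "v_of m n u (xs @ [i]) = park m n (v_of m n u xs - e (B i))"
  by (simp add: v_of_def steps_snoc)

lemma v_of_equiv: "top_equiv m n (v_of m n u xs) (u - f_of xs)"
proof (induction xs rule: rev_induct)
  case Nil
  have "u - f_of [] = u" by (simp add: f_of_Nil fun_eq_iff)
  then show ?case using top_equiv_sym[OF park_spec(2)[OF m1 n1]] by (simp add: v_of_def)
next
  case (snoc i xs)
  have "top_equiv m n (v_of m n u (xs @ [i])) (v_of m n u xs - e (B i))"
    unfolding v_of_snoc by (rule top_equiv_sym[OF park_spec(2)[OF m1 n1]])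
  moreover have "top_equiv m n (v_of m n u xs - e (B i)) (u - f_of xs - e (B i))"
    by (rule top_equiv_diff[OF snoc.IH])
  moreover have "u - f_of xs - e (B i) = u - f_of (xs @ [i])"
    by (simp add: f_of_snoc fun_eq_iff)
  ultimately show ?case using top_equiv_trans by metis
qed

lemma degree_v_of: "set xs \<subseteq> {1..n} \<Longrightarrow> degree m n (v_of m n u xs) = degree m n u - int (length xs)"
  using degree_equiv[OF v_of_equiv[of u xs]] degree_f_of[where m=m and n=n and xs=xs] by (simp add: degree_diff)

lemma legal_set: "legal m n u xs \<Longrightarrow> set xs \<subseteq> {1..n}"
  unfolding legal_def by (auto simp: set_conv_nth)

theorem main:
  shows "(\<forall>is. legal m n u is \<and> v_of m n u is (sink m) \<ge> 0
              \<longrightarrow> (\<exists>i\<in>{1..n}. v_of m n u is (B i) = 0))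
       \<and> (\<exists>M. \<forall>is. legal m n u is \<longrightarrow> length is \<le> M)
       \<and> (\<forall>is. complete_run m n u is \<longrightarrow>
              proof_for_rank m n u (f_of is)
              \<and> rank m n u = int (length is) - 1
              \<and> rank m n u = degree m n (f_of is) - 1)"
proof (intro conjI allI impI)
  fix "is" show "\<exists>i\<in>{1..n}. v_of m n u is (B i) = 0"
    using parking_B_zero[OF m1 n1 v_of_parking] .
next
  show "\<exists>M. \<forall>is. legal m n u is \<longrightarrow> length is \<le> M"
  proof (intro exI allI impI)
    fix "is" assume L: "legal m n u is"
    show "length is \<le> nat (degree m n u) + 1"
    proof (cases "is = []")
      case True then show ?thesis by simp
    next
      case False
      define k where "k = length is - 1"
      have k: "k < length is" using False by (simp add: k_def)
      have vs: "0 \<le> v_of m n u (take k is) (A m)" using L k unfolding legal_def by (auto simp: sink_eq)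
      have "set (take k is) \<subseteq> {1..n}" using legal_set[OF L] by (meson order_trans set_take_subset)
      then have "degree m n (v_of m n u (take k is)) = degree m n u - int k"
        using degree_v_of k by simp
      moreover have "0 \<le> degree m n (v_of m n u (take k is))"
        by (rule degree_nonneg[OF nonneg_parking[OF m1 n1 v_of_parking vs]])
      ultimately show ?thesis using k by (simp add: k_def)
    qed
  qed
next
  fix "is" assume CR: "complete_run m n u is"
  then have L: "legal m n u is" and neg: "v_of m n u is (A m) < 0"
    unfolding complete_run_def by (auto simp: sink_eq)
  define N where "N = length is"
  have step: "LB m n (v_of m n u (take t is)) (int N - int t - 1)"
    if "LB m n (v_of m n u (take (Suc t) is)) (int N - int (Suc t) - 1)" "t < N" for t
  proof -
    define v where "v = v_of m n u (take t is)"
    define j where "j = is ! t"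
    have leg: "j \<in> {1..n} \<and> 0 \<le> v (A m) \<and> v (B j) = 0"
      using L that(2) unfolding legal_def v_def j_def N_def by (auto simp: sink_eq)
    have "take (Suc t) is = take t is @ [j]"
      using that(2) by (simp add: N_def j_def take_Suc_conv_app_nth)
    then have vs: "v_of m n u (take (Suc t) is) = park m n (v - e (B j))"
      by (simp add: v_of_snoc v_def)
    have "LB m n (v - e (B j)) (int N - int t - 1 - 1)"
      using LB_equiv[OF top_equiv_sym[OF park_spec(2)[OF m1 n1]]] that(1) vs by (simp add: algebra_simps)
    moreover have vp: "parking m n v" unfolding v_def by (rule v_of_parking)
    moreover have "0 \<le> degree m n v" using degree_nonneg[OF nonneg_parking[OF m1 n1 vp]] leg by simp
    ultimately show ?thesis
      using KL[OF m1 n1, of "nat (degree m n v)", rule_format, of v j "int N - int t - 1"] leg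
      by (simp add: v_def)
  qed
  have LBall: "LB m n (v_of m n u (take (N - r) is)) (int r - 1)" if "r \<le> N" for r
    using that
  proof (induction r)
    case 0 then show ?case by (intro LB_neg) simp
  next
    case (Suc r)
    define t where "t = N - Suc r"
    have t: "t < N" "Suc t = N - r" "int N - int (Suc t) - 1 = int r - 1" "int N - int t - 1 = int (Suc r) - 1"
      using Suc.prems by (auto simp: t_def)
    have "LB m n (v_of m n u (take (Suc t) is)) (int N - int (Suc t) - 1)"
      using Suc.IH Suc.prems t by simp
    then have "LB m n (v_of m n u (take t is)) (int N - int t - 1)"
      using step t(1) by blast
    then show ?case using t by (simp add: t_def)
  qed
  have "LB m n (v_of m n u (take 0 is)) (int N - 1)" using LBall[of N] by simp
  then have "LB m n (park m n u) (int N - 1)" by (simp add: v_of_def)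
  then have LBu: "LB m n u (int N - 1)" using LB_equiv[OF top_equiv_sym[OF park_spec(2)[OF m1 n1]]] by blast
  have fnn: "nonneg m n (f_of is)" by (rule nonneg_f_of)
  have fdeg: "degree m n (f_of is) = int N" using degree_f_of[OF legal_set[OF L]] by (simp add: N_def)
  have noneff: "\<not> effective m n (u - f_of is)"
  proof
    assume "effective m n (u - f_of is)"
    then have "effective m n (v_of m n u is)" using effective_equiv[OF v_of_equiv] by blast
    then have "0 \<le> park m n (v_of m n u is) (A m)" using eff_iff[OF m1 n1] by blast
    moreover have "park m n (v_of m n u is) (A m) = v_of m n u is (A m)"
      by (rule park_of_parking[OF m1 n1 v_of_parking s_in[OF m1 n1]])
    ultimately show False using neg by simp
  qed
  have least: "(LEAST d. \<exists>f. nonneg m n f \<and> \<not> effective m n (u - f) \<and> degree m n f = int d) = N"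
  proof (rule Least_equality)
    show "\<exists>f. nonneg m n f \<and> \<not> effective m n (u - f) \<and> degree m n f = int N"
      using fnn noneff fdeg by blast
  next
    fix d assume "\<exists>f. nonneg m n f \<and> \<not> effective m n (u - f) \<and> degree m n f = int d"
    then obtain f where f: "nonneg m n f" "\<not> effective m n (u - f)" "degree m n f = int d" by blast
    show "N \<le> d"
    proof (rule ccontr)
      assume "\<not> N \<le> d"
      then have "degree m n f \<le> int N - 1" using f(3) by simp
      then show False using LBu f unfolding LB_def by blast
    qed
  qed
  have rk: "rank m n u = int N - 1" unfolding rank_def least ..
  show "proof_for_rank m n u (f_of is)"
    unfolding proof_for_rank_def using fnn noneff fdeg rk by simp
  show "rank m n u = int (length is) - 1" using rk by (simp add: N_def)
  show "rank m n u = degree m n (f_of is) - 1" using rk fdeg by simp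
qed

end

theorem theorem2p1:
  fixes m n :: nat and u :: config
  assumes "1 \<le> m" and "1 \<le> n"
  shows "(\<forall>is. legal m n u is \<and> v_of m n u is (sink m) \<ge> 0
              \<longrightarrow> (\<exists>i\<in>{1..n}. v_of m n u is (B i) = 0))
       \<and> (\<exists>M. \<forall>is. legal m n u is \<longrightarrow> length is \<le> M)
       \<and> (\<forall>is. complete_run m n u is \<longrightarrow>
              proof_for_rank m n u (f_of is)
              \<and> rank m n u = int (length is) - 1
              \<and> rank m n u = degree m n (f_of is) - 1)"
  by (rule main[OF assms])

end
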